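(* Let $d\geq1$ and let $0<\alpha,\gamma<\frac d2$ and $0<\beta<d$ satisfy $\frac d2<\alpha+\beta<d$ and $\alpha+\beta+\gamma>d$. Then the integral operator on $\mathbb R^d$ with kernel $k(x,y)=\langle x\rangle^{-\alpha}|x-y|^{-\beta}\langle y\rangle^{-\gamma}$ is bounded on $L^2(\mathbb R^d)$.
   Context: $\langle x\rangle=(1+|x|^2)^{1/2}$. *)

theory Defs
  imports "HOL-Analysis.Analysis"
begin

definition jbr :: "'a::euclidean_space \<Rightarrow> real" where
  "jbr x = sqrt (1 + (norm x)\<^sup>2)"

definition L2 :: "('a::euclidean_space \<Rightarrow> real) \<Rightarrow> bool" where
  "L2 f \<longleftrightarrow> f \<in> borel_measurable lborel \<and> integrable lborel (\<lambda>x. (f x)\<^sup>2)"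

definition L2_norm :: "('a::euclidean_space \<Rightarrow> real) \<Rightarrow> real" where
  "L2_norm f = sqrt (\<integral>x. (f x)\<^sup>2 \<partial>lborel)"

definition int_op :: "('a::euclidean_space \<Rightarrow> 'a \<Rightarrow> real) \<Rightarrow> ('a \<Rightarrow> real) \<Rightarrow> 'a \<Rightarrow> real" where
  "int_op k f x = (\<integral>y. k x y * f y \<partial>lborel)"

definition bounded_on_L2 :: "('a::euclidean_space \<Rightarrow> 'a \<Rightarrow> real) \<Rightarrow> bool" where
  "bounded_on_L2 k \<longleftrightarrow> (\<exists>C. \<forall>f. L2 f \<longrightarrow>
      (AE x in lborel. integrable lborel (\<lambda>y. k x y * f y)) \<and>
      L2 (int_op k f) \<and> L2_norm (int_op k f) \<le> C * L2_norm f)"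

end

theory Submission
  imports Defs
begin


lemma cball_borel[measurable]: "cball (x::'a::euclidean_space) r \<in> sets borel"
  by (simp add: borel_closed)

lemma nn_integral_scale:
  fixes f :: "'a::euclidean_space \<Rightarrow> ennreal"
  assumes [measurable]: "f \<in> borel_measurable borel" and c: "c > 0"
  shows "(\<integral>\<^sup>+x. f x \<partial>lborel) = ennreal (c ^ DIM('a)) * (\<integral>\<^sup>+x. f (c *\<^sub>R x) \<partial>lborel)"
  using c by (subst lborel_affine[of c 0]) 
     (simp_all add: nn_integral_density nn_integral_distr nn_integral_cmult)

lemma nn_integral_transl:
  fixes f :: "'a::euclidean_space \<Rightarrow> ennreal"
  assumes [measurable]: "f \<in> borel_measurable borel"
  shows "(\<integral>\<^sup>+x. f x \<partial>lborel) = (\<integral>\<^sup>+x. f (t + x) \<partial>lborel)"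
  by (subst lborel_affine[of 1 t]) 
     (simp_all add: nn_integral_density nn_integral_distr nn_integral_cmult)

lemma geo_bound:
  fixes I A :: ennreal and q :: real
  assumes "I \<le> ennreal q * I + A" "I \<noteq> \<infinity>" "0 \<le> q" "q < 1" "A \<noteq> \<infinity>"
  shows "I \<le> A / ennreal (1 - q)"
proof -
  obtain i where i: "I = ennreal i" "0 \<le> i" using assms(2) by (cases I) auto
  obtain a where a: "A = ennreal a" "0 \<le> a" using assms(5) by (cases A) auto
  have "i \<le> q * i + a" using assms(1) i a assms(3)
    by (simp add: ennreal_mult[symmetric] ennreal_plus[symmetric] mult_nonneg_nonneg del: ennreal_plus)
  then have "i \<le> a / (1 - q)" using assms(4) by (simp add: field_simps)
  then show ?thesis using i a assms(4) by (simp add: divide_ennreal)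
qed



lemma ball_powr_bound:
  fixes \<beta> :: real
  assumes b0: "0 \<le> \<beta>" and bd: "\<beta> < DIM('a)"
  shows "(\<integral>\<^sup>+z. ennreal (norm z powr (-\<beta>)) * indicator (cball (0::'a::euclidean_space) 1) z \<partial>lborel)
     \<le> ennreal (2 powr \<beta>) * emeasure lborel (cball (0::'a) 1) / ennreal (1 - 2 powr (\<beta> - DIM('a)))"
proof -
  define V where "V = emeasure lborel (cball (0::'a) 1)"
  have Vfin: "V \<noteq> \<infinity>" using emeasure_lborel_cball_finite[of "0::'a" 1] by (simp add: V_def)
  define q where "q = 2 powr (\<beta> - DIM('a))"
  have q0: "0 \<le> q" by (simp add: q_def)
  have "(2::real) powr (\<beta> - DIM('a)) < 2 powr 0" by (rule powr_less_mono) (use bd in auto)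
  then have q1: "q < 1" by (simp add: q_def)
  define g where "g = (\<lambda>(e::real) (z::'a). ennreal (norm z powr (-\<beta>)) * indicator (cball 0 1 - cball 0 e) z)"
  have gm[measurable]: "g e \<in> borel_measurable borel" for e unfolding g_def by measurable
  have gfin: "integral\<^sup>N lborel (g e) \<noteq> \<infinity>" if e: "e > 0" for e
  proof -
    have "integral\<^sup>N lborel (g e) \<le> (\<integral>\<^sup>+z. ennreal (e powr (-\<beta>)) * indicator (cball (0::'a) 1) z \<partial>lborel)"
    proof (rule nn_integral_mono)
      fix z :: 'a
      show "g e z \<le> ennreal (e powr (-\<beta>)) * indicator (cball (0::'a) 1) z"
      proof (cases "z \<in> cball 0 1 - cball 0 e")
        case True
        then have "e < norm z" by auto
        then have "norm z powr (-\<beta>) \<le> e powr (-\<beta>)" using e b0 by (intro powr_mono2') auto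
        then show ?thesis using True by (auto simp: g_def indicator_def)
      qed (auto simp: g_def indicator_def)
    qed
    also have "\<dots> = ennreal (e powr (-\<beta>)) * V" by (simp add: V_def nn_integral_cmult_indicator)
    finally show ?thesis using Vfin by (auto simp: ennreal_mult_eq_top_iff top_unique)
  qed
  have gbound: "integral\<^sup>N lborel (g e) \<le> ennreal (2 powr \<beta>) * V / ennreal (1 - q)" if e: "e > 0" for e
  proof (rule geo_bound[OF _ gfin[OF e] q0 q1])
    define h where "h = (\<lambda>z::'a. ennreal (norm z powr (-\<beta>)) * indicator (cball 0 (1/2) - cball 0 e) z)"
    have hm[measurable]: "h \<in> borel_measurable borel" unfolding h_def by measurable
    have "integral\<^sup>N lborel (g e) \<le> (\<integral>\<^sup>+z. h z + ennreal (2 powr \<beta>) * indicator (cball (0::'a) 1) z \<partial>lborel)"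
    proof (rule nn_integral_mono)
      fix z :: 'a
      show "g e z \<le> h z + ennreal (2 powr \<beta>) * indicator (cball (0::'a) 1) z"
      proof (cases "norm z \<le> 1/2")
        case True then show ?thesis by (auto simp: g_def h_def indicator_def)
      next
        case False
        then have "norm z powr (-\<beta>) \<le> (1/2) powr (-\<beta>)" using b0 by (intro powr_mono2') auto
        also have "(1/2::real) powr (-\<beta>) = 2 powr \<beta>" by (simp add: powr_minus_divide powr_divide)
        finally show ?thesis using False by (auto simp: g_def h_def indicator_def)
      qed
    qed
    also have "\<dots> = integral\<^sup>N lborel h + ennreal (2 powr \<beta>) * V"
      by (subst nn_integral_add) (auto simp: V_def nn_integral_cmult_indicator)
    also have "integral\<^sup>N lborel h \<le> ennreal q * integral\<^sup>N lborel (g e)"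
    proof -
      have eqh: "integral\<^sup>N lborel h = ennreal ((1/2) ^ DIM('a)) * (\<integral>\<^sup>+x. h ((1/2) *\<^sub>R x) \<partial>lborel)"
        by (rule nn_integral_scale) auto
      have leh: "(\<integral>\<^sup>+x. h ((1/2) *\<^sub>R x) \<partial>lborel) \<le> (\<integral>\<^sup>+x. ennreal (2 powr \<beta>) * g e x \<partial>lborel)"
      proof (rule nn_integral_mono)
        fix x :: 'a
        have n: "norm ((1/2::real) *\<^sub>R x) = norm x / 2" by simp
        have p: "(norm x / 2) powr (-\<beta>) = 2 powr \<beta> * norm x powr (-\<beta>)"
          by (simp add: powr_divide powr_minus_divide)
        show "h ((1/2) *\<^sub>R x) \<le> ennreal (2 powr \<beta>) * g e x"
        proof (cases "(1/2::real) *\<^sub>R x \<in> cball 0 (1/2) - cball 0 e")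
          case True
          then have "x \<in> cball 0 1 - cball 0 e" using e by auto
          then show ?thesis using True unfolding h_def g_def
            by (simp add: n p ennreal_mult)
        qed (simp add: h_def)
      qed
      have eqg: "(\<integral>\<^sup>+x. ennreal (2 powr \<beta>) * g e x \<partial>lborel) = ennreal (2 powr \<beta>) * integral\<^sup>N lborel (g e)"
        by (rule nn_integral_cmult) auto
      have "integral\<^sup>N lborel h \<le> ennreal ((1/2) ^ DIM('a)) * (ennreal (2 powr \<beta>) * integral\<^sup>N lborel (g e))"
        unfolding eqh eqg[symmetric] by (rule mult_left_mono[OF leh]) (rule zero_le)
      also have "\<dots> = ennreal q * integral\<^sup>N lborel (g e)"
      proof -
        have "(1/2::real) ^ DIM('a) * 2 powr \<beta> = 2 powr \<beta> / 2 ^ DIM('a)"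
          by (simp add: power_one_over)
        also have "\<dots> = q" by (simp add: q_def powr_diff powr_realpow)
        finally have qq: "q = (1/2::real) ^ DIM('a) * 2 powr \<beta>" ..
        show ?thesis unfolding qq
          by (subst ennreal_mult) (auto simp: mult.assoc)
      qed
      finally show ?thesis .
    qed
    finally show "integral\<^sup>N lborel (g e) \<le> ennreal q * integral\<^sup>N lborel (g e) + ennreal (2 powr \<beta>) * V"
      by (simp add: add_right_mono)
    show "ennreal (2 powr \<beta>) * V \<noteq> \<infinity>" using Vfin by (simp add: ennreal_mult_eq_top_iff)
  qed
  have "(\<integral>\<^sup>+z. ennreal (norm z powr (-\<beta>)) * indicator (cball (0::'a) 1) z \<partial>lborel)
        \<le> (\<integral>\<^sup>+z. (SUP n. g (1 / Suc n) z) \<partial>lborel)"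
  proof (rule nn_integral_mono)
    fix z :: 'a
    show "ennreal (norm z powr (-\<beta>)) * indicator (cball (0::'a) 1) z \<le> (SUP n. g (1 / Suc n) z)"
    proof (cases "z = 0")
      case True then show ?thesis by simp
    next
      case False
      then obtain n where n: "1 / real (Suc n) < norm z" using reals_Archimedean[of "norm z"]
        by (auto simp: divide_inverse)
      have "ennreal (norm z powr (-\<beta>)) * indicator (cball (0::'a) 1) z = g (1 / Suc n) z"
        using n by (auto simp: g_def indicator_def)
      also have "\<dots> \<le> (SUP n. g (1 / Suc n) z)" by (rule SUP_upper) simp
      finally show ?thesis .
    qed
  qed
  also have "\<dots> = (SUP n. integral\<^sup>N lborel (g (1 / Suc n)))"
  proof (rule nn_integral_monotone_convergence_SUP_AE)
    fix i
    show "AE x in lborel. g (1 / real (Suc i)) x \<le> g (1 / real (Suc (Suc i))) x"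
    proof (rule AE_I2)
      fix x :: 'a
      have "1 / real (Suc (Suc i)) \<le> 1 / real (Suc i)" by (simp add: frac_le)
      then show "g (1 / real (Suc i)) x \<le> g (1 / real (Suc (Suc i))) x"
        by (auto simp: g_def indicator_def)
    qed
  qed simp
  also have "\<dots> \<le> ennreal (2 powr \<beta>) * V / ennreal (1 - q)"
    by (rule SUP_least) (rule gbound, simp)
  finally show ?thesis by (simp add: V_def q_def)
qed



lemma outer_powr_bound:
  fixes \<nu> :: real
  assumes nd: "DIM('a) < \<nu>"
  shows "(\<integral>\<^sup>+z. ennreal (norm z powr (-\<nu>)) * indicator (- cball (0::'a::euclidean_space) 1) z \<partial>lborel)
     \<le> emeasure lborel (cball (0::'a) 2) / ennreal (1 - 2 powr (DIM('a) - \<nu>))"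
proof -
  have n0: "0 \<le> \<nu>" using nd by (metis DIM_positive less_trans of_nat_0_less_iff less_imp_le)
  define V where "V = emeasure lborel (cball (0::'a) 2)"
  have Vfin: "V \<noteq> \<infinity>" using emeasure_lborel_cball_finite[of "0::'a" 2] by (simp add: V_def)
  define q where "q = 2 powr (DIM('a) - \<nu>)"
  have q0: "0 \<le> q" by (simp add: q_def)
  have "(2::real) powr (DIM('a) - \<nu>) < 2 powr 0" by (rule powr_less_mono) (use nd in auto)
  then have q1: "q < 1" by (simp add: q_def)
  define g where "g = (\<lambda>(R::real) (z::'a). ennreal (norm z powr (-\<nu>)) * indicator (cball 0 R - cball 0 1) z)"
  have gm[measurable]: "g e \<in> borel_measurable borel" for e unfolding g_def by measurable
  have gfin: "integral\<^sup>N lborel (g R) \<noteq> \<infinity>" for R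
  proof -
    have "integral\<^sup>N lborel (g R) \<le> (\<integral>\<^sup>+z. indicator (cball (0::'a) R) z \<partial>lborel)"
    proof (rule nn_integral_mono)
      fix z :: 'a
      show "g R z \<le> indicator (cball (0::'a) R) z"
      proof (cases "z \<in> cball 0 R - cball 0 1")
        case True
        then have "1 < norm z" by auto
        then have "norm z powr (-\<nu>) \<le> 1 powr (-\<nu>)" using n0 by (intro powr_mono2') auto
        then show ?thesis using True by (auto simp: g_def indicator_def)
      qed (auto simp: g_def indicator_def)
    qed
    also have "\<dots> = emeasure lborel (cball (0::'a) R)" by simp
    finally show ?thesis using emeasure_lborel_cball_finite[of "0::'a" R] by (auto simp: top_unique)
  qed
  have gbound: "integral\<^sup>N lborel (g R) \<le> V / ennreal (1 - q)" if R: "R \<ge> 0" for R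
  proof (rule geo_bound[OF _ gfin q0 q1])
    define h where "h = (\<lambda>z::'a. ennreal (norm z powr (-\<nu>)) * indicator (cball 0 R - cball 0 2) z)"
    have hm[measurable]: "h \<in> borel_measurable borel" unfolding h_def by measurable
    have "integral\<^sup>N lborel (g R) \<le> (\<integral>\<^sup>+z. h z + indicator (cball (0::'a) 2) z \<partial>lborel)"
    proof (rule nn_integral_mono)
      fix z :: 'a
      show "g R z \<le> h z + indicator (cball (0::'a) 2) z"
      proof (cases "norm z \<le> 2")
        case True
        show ?thesis
        proof (cases "z \<in> cball 0 R - cball 0 1")
          case True
          then have "1 < norm z" by auto
          then have "norm z powr (-\<nu>) \<le> 1 powr (-\<nu>)" using n0 by (intro powr_mono2') auto
          then show ?thesis using True \<open>norm z \<le> 2\<close> by (auto simp: g_def h_def indicator_def)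
        qed (auto simp: g_def indicator_def)
      next
        case False then show ?thesis by (auto simp: g_def h_def indicator_def)
      qed
    qed
    also have "\<dots> = integral\<^sup>N lborel h + V"
      by (subst nn_integral_add) (auto simp: V_def)
    also have "integral\<^sup>N lborel h \<le> ennreal q * integral\<^sup>N lborel (g R)"
    proof -
      have eqh: "integral\<^sup>N lborel h = ennreal (2 ^ DIM('a)) * (\<integral>\<^sup>+x. h (2 *\<^sub>R x) \<partial>lborel)"
        by (rule nn_integral_scale) auto
      have leh: "(\<integral>\<^sup>+x. h (2 *\<^sub>R x) \<partial>lborel) \<le> (\<integral>\<^sup>+x. ennreal (2 powr (-\<nu>)) * g R x \<partial>lborel)"
      proof (rule nn_integral_mono)
        fix x :: 'a
        have n: "norm ((2::real) *\<^sub>R x) = 2 * norm x" by simp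
        have p: "(2 * norm x) powr (-\<nu>) = 2 powr (-\<nu>) * norm x powr (-\<nu>)"
          by (simp add: powr_mult)
        show "h (2 *\<^sub>R x) \<le> ennreal (2 powr (-\<nu>)) * g R x"
        proof (cases "(2::real) *\<^sub>R x \<in> cball 0 R - cball 0 2")
          case True
          then have "x \<in> cball 0 R - cball 0 1" using R by auto
          then show ?thesis using True unfolding h_def g_def
            by (simp add: n p ennreal_mult)
        qed (simp add: h_def)
      qed
      have eqg: "(\<integral>\<^sup>+x. ennreal (2 powr (-\<nu>)) * g R x \<partial>lborel) = ennreal (2 powr (-\<nu>)) * integral\<^sup>N lborel (g R)"
        by (rule nn_integral_cmult) auto
      have "integral\<^sup>N lborel h \<le> ennreal (2 ^ DIM('a)) * (ennreal (2 powr (-\<nu>)) * integral\<^sup>N lborel (g R))"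
        unfolding eqh eqg[symmetric] by (rule mult_left_mono[OF leh]) (rule zero_le)
      also have "\<dots> = ennreal q * integral\<^sup>N lborel (g R)"
      proof -
        have qq: "q = (2::real) ^ DIM('a) * 2 powr (-\<nu>)"
          by (simp add: q_def powr_diff powr_realpow powr_minus divide_inverse)
        show ?thesis unfolding qq
          by (subst ennreal_mult) (auto simp: mult.assoc)
      qed
      finally show ?thesis .
    qed
    finally show "integral\<^sup>N lborel (g R) \<le> ennreal q * integral\<^sup>N lborel (g R) + V"
      by (simp add: add_right_mono)
    show "V \<noteq> \<infinity>" using Vfin .
  qed
  have "(\<integral>\<^sup>+z. ennreal (norm z powr (-\<nu>)) * indicator (- cball (0::'a) 1) z \<partial>lborel)
        \<le> (\<integral>\<^sup>+z. (SUP n. g (real n) z) \<partial>lborel)"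
  proof (rule nn_integral_mono)
    fix z :: 'a
    obtain n where n: "norm z < real n" using reals_Archimedean2 by blast
    have "ennreal (norm z powr (-\<nu>)) * indicator (- cball (0::'a) 1) z = g (real n) z"
      using n by (auto simp: g_def indicator_def)
    also have "\<dots> \<le> (SUP n. g (real n) z)" by (rule SUP_upper) simp
    finally show "ennreal (norm z powr (-\<nu>)) * indicator (- cball (0::'a) 1) z \<le> (SUP n. g (real n) z)" .
  qed
  also have "\<dots> = (SUP n. integral\<^sup>N lborel (g (real n)))"
  proof (rule nn_integral_monotone_convergence_SUP_AE)
    fix i
    show "AE x in lborel. g (real i) x \<le> g (real (Suc i)) x"
      by (rule AE_I2) (auto simp: g_def indicator_def)
  qed simp
  also have "\<dots> \<le> V / ennreal (1 - q)"
    by (rule SUP_least) (rule gbound, simp)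
  finally show ?thesis by (simp add: V_def q_def)
qed



lemma jbr_ge1: "1 \<le> jbr x" unfolding jbr_def by simp
lemma jbr_pos: "0 < jbr x" using jbr_ge1[of x] by simp
lemma jbr_ge_norm: "norm x \<le> jbr x" unfolding jbr_def
  by (rule real_le_rsqrt) simp
lemma jbr_triangle: "jbr x \<le> jbr y + norm (x - y)"
proof -
  define t where "t = norm (x - y)"
  have t0: "0 \<le> t" by (simp add: t_def)
  have t: "norm x \<le> norm y + t" unfolding t_def by (metis norm_triangle_sub add.commute)
  have jx: "(jbr x)\<^sup>2 = 1 + (norm x)\<^sup>2" unfolding jbr_def by simp
  have jy: "(jbr y)\<^sup>2 = 1 + (norm y)\<^sup>2" unfolding jbr_def by simp
  have m: "norm y * t \<le> jbr y * t" using jbr_ge_norm[of y] t0 by (rule mult_right_mono)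
  have p: "(norm x)\<^sup>2 \<le> (norm y + t)\<^sup>2" by (rule power_mono[OF t norm_ge_zero])
  have e1: "(norm y + t)\<^sup>2 = (norm y)\<^sup>2 + 2 * (norm y * t) + t\<^sup>2" by (simp add: power2_eq_square algebra_simps)
  have e2: "(jbr y + t)\<^sup>2 = (jbr y)\<^sup>2 + 2 * (jbr y * t) + t\<^sup>2" by (simp add: power2_eq_square algebra_simps)
  have "(jbr x)\<^sup>2 \<le> (jbr y + t)\<^sup>2" using jx jy m p e1 e2 by linarith
  moreover have "0 \<le> jbr y + t" using jbr_pos[of y] t0 by linarith
  ultimately show ?thesis unfolding t_def[symmetric] by (rule power2_le_imp_le)
qed

lemma jbr_measurable[measurable]: "jbr \<in> borel_measurable borel"
  unfolding jbr_def[abs_def] by measurable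

lemma ennreal_div_fin: "a \<noteq> \<infinity> \<Longrightarrow> 0 < (b::real) \<Longrightarrow> a / ennreal b \<noteq> \<infinity>"
  by (cases a) (auto simp: divide_ennreal)

lemma ball_powr_r:
  fixes \<beta> :: real
  assumes b0: "0 \<le> \<beta>" and bd: "\<beta> < DIM('a::euclidean_space)"
  shows "\<exists>C\<ge>0. \<forall>r>0. (\<integral>\<^sup>+z. ennreal (norm z powr (-\<beta>) * indicator (cball (0::'a) r) z) \<partial>lborel)
     \<le> ennreal (C * r powr (DIM('a) - \<beta>))"
proof -
  define I where "I = (\<integral>\<^sup>+z. ennreal (norm z powr (-\<beta>)) * indicator (cball (0::'a) 1) z \<partial>lborel)"
  have "(2::real) powr (\<beta> - DIM('a)) < 2 powr 0" by (rule powr_less_mono) (use bd in auto)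
  then have q: "0 < 1 - (2::real) powr (\<beta> - DIM('a))" by simp
  have Ib: "I \<le> ennreal (2 powr \<beta>) * emeasure lborel (cball (0::'a) 1) / ennreal (1 - 2 powr (\<beta> - DIM('a)))"
    unfolding I_def by (rule ball_powr_bound[OF b0 bd])
  have "ennreal (2 powr \<beta>) * emeasure lborel (cball (0::'a) 1) / ennreal (1 - 2 powr (\<beta> - DIM('a))) \<noteq> \<infinity>" 
    using emeasure_lborel_cball_finite[of "0::'a" 1] q
    by (intro ennreal_div_fin) (auto simp: ennreal_mult_eq_top_iff)
  then have If: "I \<noteq> \<infinity>" using Ib by (auto simp: top_unique)
  show ?thesis
  proof (intro exI[of _ "enn2real I"] conjI allI impI)
    show "0 \<le> enn2real I" by simp
    fix r :: real assume r: "r > 0"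
    have "(\<integral>\<^sup>+z. ennreal (norm z powr (-\<beta>) * indicator (cball (0::'a) r) z) \<partial>lborel)
       = ennreal (r ^ DIM('a)) * (\<integral>\<^sup>+x. ennreal (norm (r *\<^sub>R x) powr (-\<beta>) * indicator (cball (0::'a) r) (r *\<^sub>R x)) \<partial>lborel)"
      by (rule nn_integral_scale[OF _ r]) measurable
    also have "(\<integral>\<^sup>+x. ennreal (norm (r *\<^sub>R x) powr (-\<beta>) * indicator (cball (0::'a) r) (r *\<^sub>R x)) \<partial>lborel)
       = (\<integral>\<^sup>+x. ennreal (r powr (-\<beta>)) * (ennreal (norm x powr (-\<beta>)) * indicator (cball (0::'a) 1) x) \<partial>lborel)"
    proof (rule nn_integral_cong)
      fix x :: 'a
      have "r *\<^sub>R x \<in> cball 0 r \<longleftrightarrow> x \<in> cball 0 1" using r by (simp add: mult_le_cancel_left1)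
      then show "ennreal (norm (r *\<^sub>R x) powr (-\<beta>) * indicator (cball (0::'a) r) (r *\<^sub>R x))
           = ennreal (r powr (-\<beta>)) * (ennreal (norm x powr (-\<beta>)) * indicator (cball (0::'a) 1) x)"
        using r by (simp add: indicator_def powr_mult ennreal_mult)
    qed
    also have "\<dots> = ennreal (r powr (-\<beta>)) * I" unfolding I_def by (rule nn_integral_cmult) measurable
    also have "ennreal (r ^ DIM('a)) * (ennreal (r powr (-\<beta>)) * I) = ennreal (enn2real I * r powr (DIM('a) - \<beta>))"
    proof -
      have "r ^ DIM('a) * r powr (-\<beta>) = r powr (DIM('a) - \<beta>)"
        using r by (simp add: powr_diff powr_realpow powr_minus divide_inverse)
      moreover have "I = ennreal (enn2real I)" using If by (simp add: less_top)
      moreover have "ennreal (r ^ DIM('a)) * (ennreal (r powr (-\<beta>)) * ennreal (enn2real I))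
          = ennreal (r ^ DIM('a) * r powr (-\<beta>) * enn2real I)"
        using r by (simp add: ennreal_mult mult.assoc)
      ultimately show ?thesis by (simp add: mult.commute)
    qed
    finally show "(\<integral>\<^sup>+z. ennreal (norm z powr (-\<beta>) * indicator (cball (0::'a) r) z) \<partial>lborel)
     \<le> ennreal (enn2real I * r powr (DIM('a) - \<beta>))" by simp
  qed
qed



lemma outer_powr_r:
  fixes \<nu> :: real
  assumes nd: "DIM('a::euclidean_space) < \<nu>"
  shows "\<exists>C\<ge>0. \<forall>r>0. (\<integral>\<^sup>+z. ennreal (norm z powr (-\<nu>) * indicator (- cball (0::'a) r) z) \<partial>lborel)
     \<le> ennreal (C * r powr (DIM('a) - \<nu>))"
proof -
  define I where "I = (\<integral>\<^sup>+z. ennreal (norm z powr (-\<nu>)) * indicator (- cball (0::'a) 1) z \<partial>lborel)"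
  have "(2::real) powr (DIM('a) - \<nu>) < 2 powr 0" by (rule powr_less_mono) (use nd in auto)
  then have q: "0 < 1 - (2::real) powr (DIM('a) - \<nu>)" by simp
  have Ib: "I \<le> emeasure lborel (cball (0::'a) 2) / ennreal (1 - 2 powr (DIM('a) - \<nu>))"
    unfolding I_def by (rule outer_powr_bound[OF nd])
  have "emeasure lborel (cball (0::'a) 2) / ennreal (1 - 2 powr (DIM('a) - \<nu>)) \<noteq> \<infinity>" 
    using emeasure_lborel_cball_finite[of "0::'a" 2] q
    by (intro ennreal_div_fin) (auto simp: ennreal_mult_eq_top_iff)
  then have If: "I \<noteq> \<infinity>" using Ib by (auto simp: top_unique)
  show ?thesis
  proof (intro exI[of _ "enn2real I"] conjI allI impI)
    show "0 \<le> enn2real I" by simp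
    fix r :: real assume r: "r > 0"
    have "(\<integral>\<^sup>+z. ennreal (norm z powr (-\<nu>) * indicator (- cball (0::'a) r) z) \<partial>lborel)
       = ennreal (r ^ DIM('a)) * (\<integral>\<^sup>+x. ennreal (norm (r *\<^sub>R x) powr (-\<nu>) * indicator (- cball (0::'a) r) (r *\<^sub>R x)) \<partial>lborel)"
      by (rule nn_integral_scale[OF _ r]) measurable
    also have "(\<integral>\<^sup>+x. ennreal (norm (r *\<^sub>R x) powr (-\<nu>) * indicator (- cball (0::'a) r) (r *\<^sub>R x)) \<partial>lborel)
       = (\<integral>\<^sup>+x. ennreal (r powr (-\<nu>)) * (ennreal (norm x powr (-\<nu>)) * indicator (- cball (0::'a) 1) x) \<partial>lborel)"
    proof (rule nn_integral_cong)
      fix x :: 'a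
      have "r *\<^sub>R x \<in> - cball 0 r \<longleftrightarrow> x \<in> - cball 0 1" using r by (simp add: mult_le_cancel_left1)
      then show "ennreal (norm (r *\<^sub>R x) powr (-\<nu>) * indicator (- cball (0::'a) r) (r *\<^sub>R x))
           = ennreal (r powr (-\<nu>)) * (ennreal (norm x powr (-\<nu>)) * indicator (- cball (0::'a) 1) x)"
        using r by (simp add: indicator_def powr_mult ennreal_mult)
    qed
    also have "\<dots> = ennreal (r powr (-\<nu>)) * I" unfolding I_def by (rule nn_integral_cmult) measurable
    also have "ennreal (r ^ DIM('a)) * (ennreal (r powr (-\<nu>)) * I) = ennreal (enn2real I * r powr (DIM('a) - \<nu>))"
    proof -
      have "r ^ DIM('a) * r powr (-\<nu>) = r powr (DIM('a) - \<nu>)"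
        using r by (simp add: powr_diff powr_realpow powr_minus divide_inverse)
      moreover have "I = ennreal (enn2real I)" using If by (simp add: less_top)
      moreover have "ennreal (r ^ DIM('a)) * (ennreal (r powr (-\<nu>)) * ennreal (enn2real I))
          = ennreal (r ^ DIM('a) * r powr (-\<nu>) * enn2real I)"
        using r by (simp add: ennreal_mult mult.assoc)
      ultimately show ?thesis by (simp add: mult.commute)
    qed
    finally show "(\<integral>\<^sup>+z. ennreal (norm z powr (-\<nu>) * indicator (- cball (0::'a) r) z) \<partial>lborel)
     \<le> ennreal (enn2real I * r powr (DIM('a) - \<nu>))" by simp
  qed
qed



lemma conv_pointwise:
  fixes x y :: "'a::euclidean_space"
  assumes b: "0 < \<beta>" and m: "0 < \<mu>" and y: "y \<noteq> 0"
  defines "R \<equiv> jbr x"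
  shows "norm (x - y) powr (-\<beta>) * jbr y powr (-\<mu>) \<le>
     (R/2) powr (-\<mu>) * (norm (y - x) powr (-\<beta>) * indicator (cball 0 (R/2)) (y - x))
   + (R/2) powr (-\<beta>) * (norm y powr (-\<mu>) * indicator (cball 0 R) y)
   + 3 powr \<beta> * (norm y powr (-(\<beta>+\<mu>)) * indicator (- cball 0 R) y)"
proof -
  have R1: "1 \<le> R" unfolding R_def by (rule jbr_ge1)
  have tri: "R \<le> jbr y + norm (x - y)" unfolding R_def by (rule jbr_triangle)
  have ny: "0 < norm y" using y by simp
  have jn: "norm y \<le> jbr y" by (rule jbr_ge_norm)
  have sym: "norm (y - x) = norm (x - y)" by (rule norm_minus_commute)
  have T1: "0 \<le> (R/2) powr (-\<mu>) * (norm (y - x) powr (-\<beta>) * indicator (cball 0 (R/2)) (y - x))" by simp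
  have T2: "0 \<le> (R/2) powr (-\<beta>) * (norm y powr (-\<mu>) * indicator (cball 0 R) y)" by simp
  have T3: "0 \<le> 3 powr \<beta> * (norm y powr (-(\<beta>+\<mu>)) * indicator (- cball 0 R) y)" by simp
  show ?thesis
  proof (cases "norm (x - y) \<le> R/2")
    case True
    then have "R/2 \<le> jbr y" using tri by linarith
    then have "jbr y powr (-\<mu>) \<le> (R/2) powr (-\<mu>)" using R1 m by (intro powr_mono2') auto
    then have "norm (x - y) powr (-\<beta>) * jbr y powr (-\<mu>) \<le> (R/2) powr (-\<mu>) * norm (x - y) powr (-\<beta>)"
      by (subst mult.commute) (intro mult_right_mono, auto)
    also have "\<dots> = (R/2) powr (-\<mu>) * (norm (y - x) powr (-\<beta>) * indicator (cball 0 (R/2)) (y - x))"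
      using True by (simp add: sym dist_norm)
    finally show ?thesis using T2 T3 by linarith
  next
    case False
    then have d: "R/2 < norm (x - y)" by simp
    show ?thesis
    proof (cases "norm y \<le> R")
      case True
      have a1: "norm (x - y) powr (-\<beta>) \<le> (R/2) powr (-\<beta>)" using d R1 b by (intro powr_mono2') auto
      have a2: "jbr y powr (-\<mu>) \<le> norm y powr (-\<mu>)" using jn ny m by (intro powr_mono2') auto
      have "norm (x - y) powr (-\<beta>) * jbr y powr (-\<mu>) \<le> (R/2) powr (-\<beta>) * norm y powr (-\<mu>)"
        using a1 a2 by (intro mult_mono) auto
      also have "\<dots> = (R/2) powr (-\<beta>) * (norm y powr (-\<mu>) * indicator (cball 0 R) y)"
        using True by simp
      finally show ?thesis using T1 T3 by linarith
    next
      case False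
      have "jbr y \<le> R + norm (y - x)" unfolding R_def by (rule jbr_triangle)
      then have "jbr y / 3 < norm (x - y)" using d sym by linarith
      then have a1: "norm (x - y) powr (-\<beta>) \<le> (jbr y / 3) powr (-\<beta>)"
        using jbr_pos[of y] b by (intro powr_mono2') auto
      have e: "(jbr y / 3) powr (-\<beta>) = 3 powr \<beta> * jbr y powr (-\<beta>)"
        using jbr_pos[of y] by (simp add: powr_divide powr_minus_divide)
      have "norm (x - y) powr (-\<beta>) * jbr y powr (-\<mu>) \<le> 3 powr \<beta> * jbr y powr (-\<beta>) * jbr y powr (-\<mu>)"
        using a1 e by (intro mult_right_mono) auto
      also have "\<dots> = 3 powr \<beta> * jbr y powr (-(\<beta>+\<mu>))"
        by (simp add: powr_add[symmetric] mult.assoc)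
      also have "\<dots> \<le> 3 powr \<beta> * norm y powr (-(\<beta>+\<mu>))"
        using jn ny b m by (intro mult_left_mono powr_mono2') auto
      also have "\<dots> = 3 powr \<beta> * (norm y powr (-(\<beta>+\<mu>)) * indicator (- cball 0 R) y)"
        using False by simp
      finally show ?thesis using T1 T2 by linarith
    qed
  qed
qed



lemma nn_integral_cmult_real:
  assumes "0 \<le> c" "\<And>y. 0 \<le> g y" "g \<in> borel_measurable M"
  shows "(\<integral>\<^sup>+y. ennreal (c * g y) \<partial>M) = ennreal c * (\<integral>\<^sup>+y. ennreal (g y) \<partial>M)"
  using assms by (simp add: ennreal_mult nn_integral_cmult)

lemma conv_est:
  fixes \<beta> \<mu> :: real
  assumes b0: "0 < \<beta>" and bd: "\<beta> < DIM('a::euclidean_space)" and m0: "0 < \<mu>" and md: "\<mu> < DIM('a)"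
    and bm: "DIM('a) < \<beta> + \<mu>"
  shows "\<exists>K\<ge>0. \<forall>x::'a. (\<integral>\<^sup>+y. ennreal (norm (x - y) powr (-\<beta>) * jbr y powr (-\<mu>)) \<partial>lborel)
            \<le> ennreal (K * jbr x powr (DIM('a) - \<beta> - \<mu>))"
proof -
  obtain Cb where Cb: "Cb \<ge> 0" "\<And>r. r > 0 \<Longrightarrow> (\<integral>\<^sup>+z. ennreal (norm z powr (-\<beta>) * indicator (cball (0::'a) r) z) \<partial>lborel)
     \<le> ennreal (Cb * r powr (DIM('a) - \<beta>))" using ball_powr_r[of \<beta>, where 'a='a] b0 bd by auto
  obtain Cm where Cm: "Cm \<ge> 0" "\<And>r. r > 0 \<Longrightarrow> (\<integral>\<^sup>+z. ennreal (norm z powr (-\<mu>) * indicator (cball (0::'a) r) z) \<partial>lborel)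
     \<le> ennreal (Cm * r powr (DIM('a) - \<mu>))" using ball_powr_r[of \<mu>, where 'a='a] m0 md by auto
  obtain Cn where Cn: "Cn \<ge> 0" "\<And>r. r > 0 \<Longrightarrow> (\<integral>\<^sup>+z. ennreal (norm z powr (-(\<beta>+\<mu>)) * indicator (- cball (0::'a) r) z) \<partial>lborel)
     \<le> ennreal (Cn * r powr (DIM('a) - (\<beta>+\<mu>)))" using outer_powr_r[of "\<beta>+\<mu>", where 'a='a] bm by auto
  define K where "K = Cb * 2 powr (\<beta> + \<mu> - DIM('a)) + Cm * 2 powr \<beta> + 3 powr \<beta> * Cn"
  show ?thesis
  proof (intro exI[of _ K] conjI allI)
    show "0 \<le> K" unfolding K_def using Cb Cm Cn by simp
    fix x :: 'a
    define R where "R = jbr x"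
    have R1: "1 \<le> R" unfolding R_def by (rule jbr_ge1)
    define T1 where "T1 = (\<lambda>y::'a. (R/2) powr (-\<mu>) * (norm (y - x) powr (-\<beta>) * indicator (cball 0 (R/2)) (y - x)))"
    define T2 where "T2 = (\<lambda>y::'a. (R/2) powr (-\<beta>) * (norm y powr (-\<mu>) * indicator (cball 0 R) y))"
    define T3 where "T3 = (\<lambda>y::'a. 3 powr \<beta> * (norm y powr (-(\<beta>+\<mu>)) * indicator (- cball 0 R) y))"
    have [measurable]: "T1 \<in> borel_measurable borel" "T2 \<in> borel_measurable borel" "T3 \<in> borel_measurable borel"
      unfolding T1_def T2_def T3_def by measurable
    have "(\<integral>\<^sup>+y. ennreal (norm (x - y) powr (-\<beta>) * jbr y powr (-\<mu>)) \<partial>lborel)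
        \<le> (\<integral>\<^sup>+y. ennreal (T1 y) + ennreal (T2 y) + ennreal (T3 y) \<partial>lborel)"
    proof (rule nn_integral_mono_AE)
      show "AE y in lborel. ennreal (norm (x - y) powr (-\<beta>) * jbr y powr (-\<mu>)) \<le> ennreal (T1 y) + ennreal (T2 y) + ennreal (T3 y)"
        using AE_lborel_singleton[of "0::'a"]
      proof eventually_elim
        case (elim y)
        have "norm (x - y) powr (-\<beta>) * jbr y powr (-\<mu>) \<le> T1 y + T2 y + T3 y"
          unfolding T1_def T2_def T3_def R_def using conv_pointwise[OF b0 m0 elim] by simp
        then show ?case by (simp add: ennreal_plus[symmetric] T1_def T2_def T3_def del: ennreal_plus)
      qed
    qed
    also have "\<dots> = integral\<^sup>N lborel (\<lambda>y. ennreal (T1 y)) + integral\<^sup>N lborel (\<lambda>y. ennreal (T2 y)) + integral\<^sup>N lborel (\<lambda>y. ennreal (T3 y))"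
      by (simp add: nn_integral_add)
    also have "integral\<^sup>N lborel (\<lambda>y. ennreal (T1 y)) \<le> ennreal ((R/2) powr (-\<mu>) * (Cb * (R/2) powr (DIM('a) - \<beta>)))"
    proof -
      have "integral\<^sup>N lborel (\<lambda>y. ennreal (T1 y)) = ennreal ((R/2) powr (-\<mu>)) *
          (\<integral>\<^sup>+y. ennreal (norm (y - x) powr (-\<beta>) * indicator (cball (0::'a) (R/2)) (y - x)) \<partial>lborel)"
        unfolding T1_def by (rule nn_integral_cmult_real) auto
      also have "(\<integral>\<^sup>+y. ennreal (norm (y - x) powr (-\<beta>) * indicator (cball (0::'a) (R/2)) (y - x)) \<partial>lborel)
          = (\<integral>\<^sup>+z. ennreal (norm z powr (-\<beta>) * indicator (cball (0::'a) (R/2)) z) \<partial>lborel)"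
        by (subst nn_integral_transl[where t=x]) auto
      also have "ennreal ((R/2) powr (-\<mu>)) * \<dots> \<le> ennreal ((R/2) powr (-\<mu>)) * ennreal (Cb * (R/2) powr (DIM('a) - \<beta>))"
        using Cb(2)[of "R/2"] R1 by (intro mult_left_mono) auto
      finally show ?thesis by (simp add: ennreal_mult Cb)
    qed
    also have "integral\<^sup>N lborel (\<lambda>y. ennreal (T2 y)) \<le> ennreal ((R/2) powr (-\<beta>) * (Cm * R powr (DIM('a) - \<mu>)))"
    proof -
      have "integral\<^sup>N lborel (\<lambda>y. ennreal (T2 y)) = ennreal ((R/2) powr (-\<beta>)) *
          (\<integral>\<^sup>+y. ennreal (norm y powr (-\<mu>) * indicator (cball (0::'a) R) y) \<partial>lborel)"
        unfolding T2_def by (rule nn_integral_cmult_real) auto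
      also have "\<dots> \<le> ennreal ((R/2) powr (-\<beta>)) * ennreal (Cm * R powr (DIM('a) - \<mu>))"
        using Cm(2)[of R] R1 by (intro mult_left_mono) auto
      finally show ?thesis by (simp add: ennreal_mult Cm)
    qed
    also have "integral\<^sup>N lborel (\<lambda>y. ennreal (T3 y)) \<le> ennreal (3 powr \<beta> * (Cn * R powr (DIM('a) - (\<beta>+\<mu>))))"
    proof -
      have "integral\<^sup>N lborel (\<lambda>y. ennreal (T3 y)) = ennreal (3 powr \<beta>) *
          (\<integral>\<^sup>+y. ennreal (norm y powr (-(\<beta>+\<mu>)) * indicator (- cball (0::'a) R) y) \<partial>lborel)"
        unfolding T3_def by (rule nn_integral_cmult_real) auto
      also have "\<dots> \<le> ennreal (3 powr \<beta>) * ennreal (Cn * R powr (DIM('a) - (\<beta>+\<mu>)))"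
        using Cn(2)[of R] R1 by (intro mult_left_mono) auto
      finally show ?thesis by (simp add: ennreal_mult Cn)
    qed
    also have "ennreal ((R/2) powr (-\<mu>) * (Cb * (R/2) powr (DIM('a) - \<beta>)))
       + ennreal ((R/2) powr (-\<beta>) * (Cm * R powr (DIM('a) - \<mu>)))
       + ennreal (3 powr \<beta> * (Cn * R powr (DIM('a) - (\<beta>+\<mu>))))
       = ennreal (K * R powr (DIM('a) - \<beta> - \<mu>))"
    proof -
      have R0: "0 < R" using R1 by simp
      have e1: "(R/2) powr (-\<mu>) * (R/2) powr (DIM('a) - \<beta>) = 2 powr (\<beta> + \<mu> - DIM('a)) * R powr (DIM('a) - \<beta> - \<mu>)"
      proof -
        have "(R/2) powr (-\<mu>) * (R/2) powr (DIM('a) - \<beta>) = (R/2) powr (DIM('a) - \<beta> - \<mu>)"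
          by (simp add: powr_add[symmetric])
        also have "\<dots> = R powr (DIM('a) - \<beta> - \<mu>) / 2 powr (DIM('a) - \<beta> - \<mu>)"
          using R0 by (simp add: powr_divide)
        also have "\<dots> = 2 powr (\<beta> + \<mu> - DIM('a)) * R powr (DIM('a) - \<beta> - \<mu>)"
          by (simp add: powr_minus_divide[symmetric] divide_inverse powr_minus[symmetric] algebra_simps)
        finally show ?thesis .
      qed
      have e2: "(R/2) powr (-\<beta>) * R powr (DIM('a) - \<mu>) = 2 powr \<beta> * R powr (DIM('a) - \<beta> - \<mu>)"
      proof -
        have "(R/2) powr (-\<beta>) = 2 powr \<beta> * R powr (-\<beta>)" using R0 by (simp add: powr_divide powr_minus_divide)
        moreover have "real DIM('a) - \<mu> - \<beta> = real DIM('a) - \<beta> - \<mu>" by simp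
        ultimately show ?thesis by (simp add: mult.assoc powr_add[symmetric]) (metis diff_diff_eq add.commute)
      qed
      have e3: "R powr (DIM('a) - (\<beta>+\<mu>)) = R powr (DIM('a) - \<beta> - \<mu>)" by (simp add: algebra_simps)
      have "(R/2) powr (-\<mu>) * (Cb * (R/2) powr (DIM('a) - \<beta>))
         + (R/2) powr (-\<beta>) * (Cm * R powr (DIM('a) - \<mu>))
         + 3 powr \<beta> * (Cn * R powr (DIM('a) - (\<beta>+\<mu>))) = K * R powr (DIM('a) - \<beta> - \<mu>)"
        unfolding K_def e3 using e1 e2 by (simp add: algebra_simps)
      then show ?thesis using Cb Cm Cn by (simp add: ennreal_plus[symmetric] del: ennreal_plus)
    qed
    finally show "(\<integral>\<^sup>+y. ennreal (norm (x - y) powr (-\<beta>) * jbr y powr (-\<mu>)) \<partial>lborel)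
            \<le> ennreal (K * jbr x powr (DIM('a) - \<beta> - \<mu>))" unfolding R_def by (simp add: add_mono)
  qed
qed



lemma weight_est:
  fixes a \<beta> c :: real
  assumes b0: "0 < \<beta>" and bd: "\<beta> < DIM('a::euclidean_space)" and c0: "0 < c"
    and cd: "c + DIM('a)/2 < DIM('a)" and bc: "DIM('a) < \<beta> + c + DIM('a)/2" and abc: "DIM('a) \<le> a + \<beta> + c"
  shows "\<exists>C\<ge>0. \<forall>x::'a. (\<integral>\<^sup>+y. ennreal (jbr x powr (-a) * norm (x - y) powr (-\<beta>) * jbr y powr (-c) * jbr y powr (-(DIM('a)/2))) \<partial>lborel)
            \<le> ennreal (C * jbr x powr (-(DIM('a)/2)))"
proof -
  obtain K where K: "K \<ge> 0" "\<And>x::'a. (\<integral>\<^sup>+y. ennreal (norm (x - y) powr (-\<beta>) * jbr y powr (-(c + DIM('a)/2))) \<partial>lborel)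
            \<le> ennreal (K * jbr x powr (DIM('a) - \<beta> - (c + DIM('a)/2)))"
    using conv_est[of \<beta> "c + DIM('a)/2", where 'a='a] b0 bd c0 cd bc by (auto simp: add.assoc)
  show ?thesis
  proof (intro exI[of _ K] conjI allI)
    show "0 \<le> K" by (rule K)
    fix x :: 'a
    have "(\<integral>\<^sup>+y. ennreal (jbr x powr (-a) * norm (x - y) powr (-\<beta>) * jbr y powr (-c) * jbr y powr (-(DIM('a)/2))) \<partial>lborel)
        = (\<integral>\<^sup>+y. ennreal (jbr x powr (-a) * (norm (x - y) powr (-\<beta>) * jbr y powr (-(c + DIM('a)/2)))) \<partial>lborel)"
    proof (rule nn_integral_cong)
      fix y :: 'a
      have "jbr y powr (-c) * jbr y powr (-(DIM('a)/2)) = jbr y powr (-(c + DIM('a)/2))"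
        by (simp add: powr_add[symmetric])
      then show "ennreal (jbr x powr (-a) * norm (x - y) powr (-\<beta>) * jbr y powr (-c) * jbr y powr (-(DIM('a)/2)))
        = ennreal (jbr x powr (-a) * (norm (x - y) powr (-\<beta>) * jbr y powr (-(c + DIM('a)/2))))"
        by (simp only: mult.assoc)
    qed
    also have "\<dots> = ennreal (jbr x powr (-a)) * (\<integral>\<^sup>+y. ennreal (norm (x - y) powr (-\<beta>) * jbr y powr (-(c + DIM('a)/2))) \<partial>lborel)"
      by (rule nn_integral_cmult_real) auto
    also have "\<dots> \<le> ennreal (jbr x powr (-a)) * ennreal (K * jbr x powr (DIM('a) - \<beta> - (c + DIM('a)/2)))"
      by (intro mult_left_mono K(2)) auto
    also have "\<dots> \<le> ennreal (K * jbr x powr (-(DIM('a)/2)))"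
    proof -
      have j1: "1 \<le> jbr x" by (rule jbr_ge1)
      have "jbr x powr (-a) * (K * jbr x powr (DIM('a) - \<beta> - (c + DIM('a)/2)))
          = K * (jbr x powr (DIM('a) - a - \<beta> - c) * jbr x powr (-(DIM('a)/2)))"
        by (simp add: powr_add[symmetric] algebra_simps)
      also have "\<dots> \<le> K * (1 * jbr x powr (-(DIM('a)/2)))"
      proof -
        have "jbr x powr (DIM('a) - a - \<beta> - c) \<le> jbr x powr 0"
          using j1 abc by (intro powr_mono) auto
        then show ?thesis using j1 K(1) by (intro mult_left_mono mult_right_mono) auto
      qed
      finally have "jbr x powr (-a) * (K * jbr x powr (DIM('a) - \<beta> - (c + DIM('a)/2))) \<le> K * jbr x powr (-(DIM('a)/2))"
        by simp
      then have "ennreal (jbr x powr (-a) * (K * jbr x powr (DIM('a) - \<beta> - (c + DIM('a)/2)))) \<le> ennreal (K * jbr x powr (-(DIM('a)/2)))"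
        by (rule ennreal_leI)
      then show ?thesis using K(1) by (subst ennreal_mult'[symmetric]) auto
    qed
    finally show "(\<integral>\<^sup>+y. ennreal (jbr x powr (-a) * norm (x - y) powr (-\<beta>) * jbr y powr (-c) * jbr y powr (-(DIM('a)/2))) \<partial>lborel)
            \<le> ennreal (K * jbr x powr (-(DIM('a)/2)))" .
  qed
qed



lemma schur:
  fixes k :: "'a::euclidean_space \<Rightarrow> 'a \<Rightarrow> real" and w :: "'a \<Rightarrow> real"
  assumes kpos: "\<And>x y. 0 \<le> k x y"
    and km[measurable]: "(\<lambda>(x,y). k x y) \<in> borel_measurable (lborel \<Otimes>\<^sub>M lborel)"
    and wpos: "\<And>x. 0 < w x" and wm[measurable]: "w \<in> borel_measurable lborel"
    and C1: "0 \<le> C1" "\<And>x. (\<integral>\<^sup>+y. ennreal (k x y * w y) \<partial>lborel) \<le> ennreal (C1 * w x)"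
    and C2: "0 \<le> C2" "\<And>y. (\<integral>\<^sup>+x. ennreal (k x y * w x) \<partial>lborel) \<le> ennreal (C2 * w y)"
  shows "bounded_on_L2 k"
  unfolding bounded_on_L2_def
proof (intro exI[of _ "sqrt (C1 * C2)"] allI impI conjI)
  fix f :: "'a \<Rightarrow> real" assume "L2 f"
  then have fm[measurable]: "f \<in> borel_measurable lborel" and fi: "integrable lborel (\<lambda>x. (f x)\<^sup>2)"
    unfolding L2_def by auto
  define F where "F = (\<lambda>x. \<integral>\<^sup>+y. ennreal (k x y * \<bar>f y\<bar>) \<partial>lborel)"
  define B where "B = (\<lambda>x. \<integral>\<^sup>+y. ennreal (k x y / w y * (f y)\<^sup>2) \<partial>lborel)"
  have Fm[measurable]: "F \<in> borel_measurable lborel" unfolding F_def by measurable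
  have Bm[measurable]: "B \<in> borel_measurable lborel" unfolding B_def by measurable
  have CS: "F x ^ 2 \<le> ennreal (C1 * w x) * B x" for x
  proof -
    have "F x ^ 2 = (\<integral>\<^sup>+y. ennreal (sqrt (k x y * w y)) * ennreal (sqrt (k x y / w y) * \<bar>f y\<bar>) \<partial>lborel) ^ 2"
      unfolding F_def
    proof (intro arg_cong[where f="\<lambda>a. a ^ 2"] nn_integral_cong)
      fix y
      have "sqrt (k x y * w y) * (sqrt (k x y / w y) * \<bar>f y\<bar>) = sqrt (k x y * w y * (k x y / w y)) * \<bar>f y\<bar>"
        by (subst real_sqrt_mult[of "k x y * w y" "k x y / w y"]) (simp only: mult.assoc)
      also have "k x y * w y * (k x y / w y) = (k x y)\<^sup>2" using wpos[of y] by (simp add: power2_eq_square)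
      finally have "sqrt (k x y * w y) * (sqrt (k x y / w y) * \<bar>f y\<bar>) = k x y * \<bar>f y\<bar>"
        using kpos[of x y] by simp
      then show "ennreal (k x y * \<bar>f y\<bar>) = ennreal (sqrt (k x y * w y)) * ennreal (sqrt (k x y / w y) * \<bar>f y\<bar>)"
        using kpos[of x y] wpos[of y] by (subst ennreal_mult[symmetric]) (auto simp: less_imp_le)
    qed
    also have "\<dots> \<le> (\<integral>\<^sup>+y. ennreal (sqrt (k x y * w y)) ^ 2 \<partial>lborel) * (\<integral>\<^sup>+y. ennreal (sqrt (k x y / w y) * \<bar>f y\<bar>) ^ 2 \<partial>lborel)"
      by (rule Cauchy_Schwarz_nn_integral) measurable
    also have "(\<integral>\<^sup>+y. ennreal (sqrt (k x y * w y)) ^ 2 \<partial>lborel) = (\<integral>\<^sup>+y. ennreal (k x y * w y) \<partial>lborel)"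
    proof (intro nn_integral_cong)
      fix y
      have "0 \<le> k x y * w y" using kpos[of x y] wpos[of y] by simp
      then show "ennreal (sqrt (k x y * w y)) ^ 2 = ennreal (k x y * w y)"
        by (simp add: ennreal_power)
    qed
    also have "(\<integral>\<^sup>+y. ennreal (sqrt (k x y / w y) * \<bar>f y\<bar>) ^ 2 \<partial>lborel) = B x"
      unfolding B_def
    proof (intro nn_integral_cong)
      fix y
      have "0 \<le> k x y / w y" using kpos[of x y] wpos[of y] by simp
      then show "ennreal (sqrt (k x y / w y) * \<bar>f y\<bar>) ^ 2 = ennreal (k x y / w y * (f y)\<^sup>2)"
        by (simp add: ennreal_power power_mult_distrib)
    qed
    finally show ?thesis using C1(2)[of x] by (meson order_trans mult_right_mono zero_le)
  qed
  have fint: "(\<integral>\<^sup>+y. ennreal ((f y)\<^sup>2) \<partial>lborel) = ennreal (\<integral>y. (f y)\<^sup>2 \<partial>lborel)"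
    by (rule nn_integral_eq_integral[OF fi]) simp
  have Fbound: "(\<integral>\<^sup>+x. F x ^ 2 \<partial>lborel) \<le> ennreal (C1 * C2 * (\<integral>y. (f y)\<^sup>2 \<partial>lborel))"
  proof -
    have "(\<integral>\<^sup>+x. F x ^ 2 \<partial>lborel) \<le> (\<integral>\<^sup>+x. ennreal (C1 * w x) * B x \<partial>lborel)"
      by (rule nn_integral_mono) (rule CS)
    also have "\<dots> = (\<integral>\<^sup>+x. (\<integral>\<^sup>+y. ennreal (C1 * w x * (k x y / w y * (f y)\<^sup>2)) \<partial>lborel) \<partial>lborel)"
      unfolding B_def
    proof (rule nn_integral_cong)
      fix x
      show "ennreal (C1 * w x) * (\<integral>\<^sup>+y. ennreal (k x y / w y * (f y)\<^sup>2) \<partial>lborel)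
        = (\<integral>\<^sup>+y. ennreal (C1 * w x * (k x y / w y * (f y)\<^sup>2)) \<partial>lborel)"
        using C1(1) wpos[of x] kpos wpos by (subst nn_integral_cmult_real) (auto simp: less_imp_le)
    qed
    also have "\<dots> = (\<integral>\<^sup>+y. (\<integral>\<^sup>+x. ennreal (C1 * w x * (k x y / w y * (f y)\<^sup>2)) \<partial>lborel) \<partial>lborel)"
      by (rule lborel_pair.Fubini'[symmetric]) measurable
    also have "\<dots> = (\<integral>\<^sup>+y. ennreal (C1 * (f y)\<^sup>2 / w y) * (\<integral>\<^sup>+x. ennreal (k x y * w x) \<partial>lborel) \<partial>lborel)"
    proof (rule nn_integral_cong)
      fix y
      have "(\<integral>\<^sup>+x. ennreal (C1 * w x * (k x y / w y * (f y)\<^sup>2)) \<partial>lborel)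
          = (\<integral>\<^sup>+x. ennreal (C1 * (f y)\<^sup>2 / w y * (k x y * w x)) \<partial>lborel)"
        by (intro nn_integral_cong) (simp add: field_simps)
      also have "\<dots> = ennreal (C1 * (f y)\<^sup>2 / w y) * (\<integral>\<^sup>+x. ennreal (k x y * w x) \<partial>lborel)"
        using C1(1) wpos kpos by (subst nn_integral_cmult_real) (auto simp: less_imp_le)
      finally show "(\<integral>\<^sup>+x. ennreal (C1 * w x * (k x y / w y * (f y)\<^sup>2)) \<partial>lborel)
          = ennreal (C1 * (f y)\<^sup>2 / w y) * (\<integral>\<^sup>+x. ennreal (k x y * w x) \<partial>lborel)" .
    qed
    also have "\<dots> \<le> (\<integral>\<^sup>+y. ennreal (C1 * (f y)\<^sup>2 / w y) * ennreal (C2 * w y) \<partial>lborel)"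
      by (intro nn_integral_mono mult_left_mono C2(2)) simp
    also have "\<dots> = (\<integral>\<^sup>+y. ennreal (C1 * C2) * ennreal ((f y)\<^sup>2) \<partial>lborel)"
    proof (rule nn_integral_cong)
      fix y
      have "C1 * (f y)\<^sup>2 / w y * (C2 * w y) = C1 * C2 * (f y)\<^sup>2" using wpos[of y] by (simp add: field_simps)
      then show "ennreal (C1 * (f y)\<^sup>2 / w y) * ennreal (C2 * w y) = ennreal (C1 * C2) * ennreal ((f y)\<^sup>2)"
        using C1(1) C2(1) wpos[of y] by (simp add: ennreal_mult[symmetric] less_imp_le)
    qed
    also have "\<dots> = ennreal (C1 * C2) * ennreal (\<integral>y. (f y)\<^sup>2 \<partial>lborel)"
      by (subst nn_integral_cmult) (auto simp: fint)
    also have "\<dots> = ennreal (C1 * C2 * (\<integral>y. (f y)\<^sup>2 \<partial>lborel))"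
      using C1(1) C2(1) by (simp add: ennreal_mult)
    finally show ?thesis .
  qed
  then have Ffin: "(\<integral>\<^sup>+x. F x ^ 2 \<partial>lborel) \<noteq> \<infinity>" by (auto simp: top_unique)
  have AEF: "AE x in lborel. F x \<noteq> \<infinity>"
    using nn_integral_PInf_AE[OF _ Ffin] by (auto simp: power_eq_top_ennreal)
  have intk: "integrable lborel (\<lambda>y. k x y * f y)" if "F x \<noteq> \<infinity>" for x
  proof (rule integrableI_bounded)
    show "(\<lambda>y. k x y * f y) \<in> borel_measurable lborel" by measurable
    have "(\<integral>\<^sup>+y. ennreal (norm (k x y * f y)) \<partial>lborel) = F x"
      unfolding F_def using kpos by (intro nn_integral_cong) (simp add: abs_mult)
    then show "(\<integral>\<^sup>+y. ennreal (norm (k x y * f y)) \<partial>lborel) < \<infinity>" using that by (simp add: less_top)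
  qed
  show "AE x in lborel. integrable lborel (\<lambda>y. k x y * f y)"
    using AEF by eventually_elim (rule intk)
  have Tm[measurable]: "int_op k f \<in> borel_measurable lborel"
    unfolding int_op_def[abs_def] by measurable
  have Tb: "ennreal ((int_op k f x)\<^sup>2) \<le> F x ^ 2" for x
  proof -
    have "ennreal (norm (int_op k f x)) \<le> F x"
    proof (cases "integrable lborel (\<lambda>y. k x y * f y)")
      case True
      have "ennreal (norm (int_op k f x)) \<le> (\<integral>\<^sup>+y. ennreal (norm (k x y * f y)) \<partial>lborel)"
        unfolding int_op_def by (rule integral_norm_bound_ennreal[OF True])
      also have "\<dots> = F x" unfolding F_def using kpos by (intro nn_integral_cong) (simp add: abs_mult)
      finally show ?thesis .
    next
      case False
      then show ?thesis by (simp add: int_op_def not_integrable_integral_eq)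
    qed
    then have "ennreal (norm (int_op k f x)) ^ 2 \<le> F x ^ 2" by (intro power_mono) auto
    moreover have "ennreal (norm (int_op k f x)) ^ 2 = ennreal ((int_op k f x)\<^sup>2)"
      by (simp add: ennreal_power)
    ultimately show ?thesis by simp
  qed
  have Tnn: "(\<integral>\<^sup>+x. ennreal ((int_op k f x)\<^sup>2) \<partial>lborel) \<le> ennreal (C1 * C2 * (\<integral>y. (f y)\<^sup>2 \<partial>lborel))"
  proof -
    have "(\<integral>\<^sup>+x. ennreal ((int_op k f x)\<^sup>2) \<partial>lborel) \<le> (\<integral>\<^sup>+x. F x ^ 2 \<partial>lborel)"
      by (rule nn_integral_mono) (rule Tb)
    then show ?thesis using Fbound by (rule order_trans)
  qed
  have Tint: "integrable lborel (\<lambda>x. (int_op k f x)\<^sup>2)"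
  proof (rule integrableI_bounded)
    show "(\<lambda>x. (int_op k f x)\<^sup>2) \<in> borel_measurable lborel" by measurable
    have "(\<integral>\<^sup>+x. ennreal (norm ((int_op k f x)\<^sup>2)) \<partial>lborel) = (\<integral>\<^sup>+x. ennreal ((int_op k f x)\<^sup>2) \<partial>lborel)" by simp
    then show "(\<integral>\<^sup>+x. ennreal (norm ((int_op k f x)\<^sup>2)) \<partial>lborel) < \<infinity>"
      using le_less_trans[OF Tnn ennreal_less_top] by simp
  qed
  show "L2 (int_op k f)" unfolding L2_def using Tint by simp
  have "(\<integral>x. (int_op k f x)\<^sup>2 \<partial>lborel) = enn2real (\<integral>\<^sup>+x. ennreal ((int_op k f x)\<^sup>2) \<partial>lborel)"
    by (rule integral_eq_nn_integral) auto
  also have "\<dots> \<le> enn2real (ennreal (C1 * C2 * (\<integral>y. (f y)\<^sup>2 \<partial>lborel)))"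
    by (rule enn2real_mono[OF Tnn]) simp
  also have "\<dots> = C1 * C2 * (\<integral>y. (f y)\<^sup>2 \<partial>lborel)"
    using C1(1) C2(1) by (simp add: integral_nonneg_AE)
  finally have "sqrt (\<integral>x. (int_op k f x)\<^sup>2 \<partial>lborel) \<le> sqrt (C1 * C2 * (\<integral>y. (f y)\<^sup>2 \<partial>lborel))"
    by simp
  then show "L2_norm (int_op k f) \<le> sqrt (C1 * C2) * L2_norm f"
    unfolding L2_norm_def by (simp add: real_sqrt_mult)
qed



theorem lemma3p2:
  fixes \<alpha> \<beta> \<gamma> :: real
  assumes "0 < \<alpha>" "\<alpha> < real DIM('a::euclidean_space) / 2"
    and "0 < \<gamma>" "\<gamma> < real DIM('a) / 2"
    and "0 < \<beta>" "\<beta> < real DIM('a)"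
    and "real DIM('a) / 2 < \<alpha> + \<beta>" "\<alpha> + \<beta> < real DIM('a)"
    and "\<alpha> + \<beta> + \<gamma> > real DIM('a)"
  shows "bounded_on_L2 (\<lambda>(x::'a) y. jbr x powr (-\<alpha>) * norm (x - y) powr (-\<beta>) * jbr y powr (-\<gamma>))"
proof -
  obtain C1 where C1: "C1 \<ge> 0" "\<And>x::'a. (\<integral>\<^sup>+y. ennreal (jbr x powr (-\<alpha>) * norm (x - y) powr (-\<beta>) * jbr y powr (-\<gamma>) * jbr y powr (-(DIM('a)/2))) \<partial>lborel)
            \<le> ennreal (C1 * jbr x powr (-(DIM('a)/2)))"
    using weight_est[of \<beta> \<gamma> \<alpha>, where 'a='a] assms by auto
  obtain C2 where C2: "C2 \<ge> 0" "\<And>y::'a. (\<integral>\<^sup>+x. ennreal (jbr y powr (-\<gamma>) * norm (y - x) powr (-\<beta>) * jbr x powr (-\<alpha>) * jbr x powr (-(DIM('a)/2))) \<partial>lborel)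
            \<le> ennreal (C2 * jbr y powr (-(DIM('a)/2)))"
    using weight_est[of \<beta> \<alpha> \<gamma>, where 'a='a] assms by auto
  show ?thesis
  proof (rule schur[where w="\<lambda>x. jbr x powr (-(DIM('a)/2))"])
    show "\<And>x y::'a. 0 \<le> jbr x powr (-\<alpha>) * norm (x - y) powr (-\<beta>) * jbr y powr (-\<gamma>)" by simp
    show "(\<lambda>(x, y). jbr x powr (-\<alpha>) * norm (x - y) powr (-\<beta>) * jbr y powr (-\<gamma>)) \<in> borel_measurable (lborel \<Otimes>\<^sub>M (lborel::'a measure))"
      by measurable
    show "\<And>x::'a. 0 < jbr x powr (-(DIM('a)/2))" by (metis jbr_pos powr_gt_zero less_irrefl)
    show "(\<lambda>x::'a. jbr x powr (-(DIM('a)/2))) \<in> borel_measurable lborel" by measurable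
    show "0 \<le> C1" "0 \<le> C2" by fact+
    show "\<And>x::'a. (\<integral>\<^sup>+y. ennreal (jbr x powr (-\<alpha>) * norm (x - y) powr (-\<beta>) * jbr y powr (-\<gamma>) * jbr y powr (-(DIM('a)/2))) \<partial>lborel)
            \<le> ennreal (C1 * jbr x powr (-(DIM('a)/2)))" by (rule C1(2))
    fix y :: 'a
    have "(\<integral>\<^sup>+x. ennreal (jbr x powr (-\<alpha>) * norm (x - y) powr (-\<beta>) * jbr y powr (-\<gamma>) * jbr x powr (-(DIM('a)/2))) \<partial>lborel)
       = (\<integral>\<^sup>+x. ennreal (jbr y powr (-\<gamma>) * norm (y - x) powr (-\<beta>) * jbr x powr (-\<alpha>) * jbr x powr (-(DIM('a)/2))) \<partial>lborel)"
      by (intro nn_integral_cong) (simp add: norm_minus_commute mult_ac)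
    then show "(\<integral>\<^sup>+x. ennreal (jbr x powr (-\<alpha>) * norm (x - y) powr (-\<beta>) * jbr y powr (-\<gamma>) * jbr x powr (-(DIM('a)/2))) \<partial>lborel)
            \<le> ennreal (C2 * jbr y powr (-(DIM('a)/2)))" using C2(2)[of y] by simp
  qed
qed

end
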